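(* For every $n\ge 1$, if $\pi$ is uniformly random in $S_n$, then $$\mathrm{Cov}(\mathrm{inv}(\pi),\mathrm{maj}(\pi))=\frac{n(n-1)}{8}.$$ In particular, the correlation coefficient of $\mathrm{inv}$ and $\mathrm{maj}$ on $S_n$ equals $\frac{9(n-1)}{2n^2+3n-5}=\frac{9}{2n+5}$ for $n\ge 2$, which tends to $0$ as $n\to\infty$.
   Context: For a permutation $\pi=\pi_1\cdots\pi_n$ of $\{1,\dots,n\}$: $\mathrm{inv}(\pi)$ is the number of pairs $1\le i<j\le n$ with $\pi_i>\pi_j$, and $\mathrm{maj}(\pi)$ is the sum of all positions $i\in\{1,\dots,n-1\}$ with $\pi_i>\pi_{i+1}$. Both statistics have variance $(2n^3+3n^2-5n)/72$ under the uniform distribution on $S_n$. *)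

theory Defs
  imports "HOL-Probability.Probability" "HOL-Combinatorics.Permutations"
begin

definition perms :: "nat \<Rightarrow> (nat \<Rightarrow> nat) set" where
  "perms n = {p. p permutes {1..n}}"

definition unif_perm :: "nat \<Rightarrow> (nat \<Rightarrow> nat) pmf" where
  "unif_perm n = pmf_of_set (perms n)"

definition inv_stat :: "nat \<Rightarrow> (nat \<Rightarrow> nat) \<Rightarrow> nat" where
  "inv_stat n p = card {(i, j). 1 \<le> i \<and> i < j \<and> j \<le> n \<and> p i > p j}"

definition maj_stat :: "nat \<Rightarrow> (nat \<Rightarrow> nat) \<Rightarrow> nat" where
  "maj_stat n p = (\<Sum>i \<in> {i \<in> {1..<n}. p i > p (Suc i)}. i)"

definition covariance :: "'a pmf \<Rightarrow> ('a \<Rightarrow> real) \<Rightarrow> ('a \<Rightarrow> real) \<Rightarrow> real" where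
  "covariance M X Y =
     measure_pmf.expectation M (\<lambda>x. (X x - measure_pmf.expectation M X) *
                                      (Y x - measure_pmf.expectation M Y))"

definition correlation :: "'a pmf \<Rightarrow> ('a \<Rightarrow> real) \<Rightarrow> ('a \<Rightarrow> real) \<Rightarrow> real" where
  "correlation M X Y =
     covariance M X Y / sqrt (measure_pmf.variance M X * measure_pmf.variance M Y)"

end

theory Submission
  imports Defs
begin

definition ext :: "nat \<Rightarrow> (nat \<Rightarrow> nat) \<Rightarrow> nat \<Rightarrow> nat \<Rightarrow> nat" where
  "ext n p v i = (if i = Suc n then v else if i \<in> {1..n} then (if v \<le> p i then Suc (p i) else p i) else i)"

lemma ext_permutes:
  assumes p: "p permutes {1..n}" and v: "v \<in> {1..Suc n}"
  shows "ext n p v permutes {1..Suc n}"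
proof (rule bij_imp_permutes)
  have pin: "\<And>i. i \<in> {1..n} \<Longrightarrow> p i \<in> {1..n}" using permutes_in_image[OF p] by blast
  have inj: "inj_on (ext n p v) {1..Suc n}"
  proof (rule inj_onI)
    fix x y assume x: "x \<in> {1..Suc n}" and y: "y \<in> {1..Suc n}" and e: "ext n p v x = ext n p v y"
    show "x = y"
    proof (cases "x = Suc n")
      case True
      then show ?thesis using e y pin[of y] by (auto simp: ext_def split: if_splits)
    next
      case False
      then have xn: "x \<in> {1..n}" using x by auto
      show ?thesis
      proof (cases "y = Suc n")
        case True then show ?thesis using e xn pin[of x] by (auto simp: ext_def split: if_splits)
      next
        case False
        then have yn: "y \<in> {1..n}" using y by auto
        have "p x = p y" using e xn yn pin[of x] pin[of y] by (auto simp: ext_def split: if_splits)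
        then show ?thesis using permutes_inj[OF p] by (auto dest: injD)
      qed
    qed
  qed
  have sub: "ext n p v ` {1..Suc n} \<subseteq> {1..Suc n}"
    using v pin by (auto simp: ext_def)
  have "ext n p v ` {1..Suc n} = {1..Suc n}"
    by (rule endo_inj_surj[OF _ sub inj]) simp
  then show "bij_betw (ext n p v) {1..Suc n} {1..Suc n}" using inj by (simp add: bij_betw_def)
next
  fix x assume "x \<notin> {1..Suc n}" then show "ext n p v x = x" by (auto simp: ext_def)
qed

lemma ext_last: "ext n p v (Suc n) = v" by (simp add: ext_def)

lemma ext_inj: "inj_on (\<lambda>(p,v). ext n p v) (perms n \<times> {1..Suc n})"
proof (rule inj_onI, clarify)
  fix p v p' v' assume p: "p \<in> perms n" and p': "p' \<in> perms n" and v: "v \<in> {1..Suc n}" and v': "v' \<in> {1..Suc n}"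
    and e: "ext n p v = ext n p' v'"
  have vv: "v = v'" using arg_cong[OF e, of "\<lambda>f. f (Suc n)"] by (simp add: ext_last)
  have pp: "p = p'"
  proof
    fix i
    show "p i = p' i"
    proof (cases "i \<in> {1..n}")
      case True
      have "ext n p v i = ext n p' v i" using e vv by simp
      then show ?thesis using True by (auto simp: ext_def split: if_splits)
    next
      case False
      then show ?thesis using p p' by (simp add: perms_def permutes_not_in)
    qed
  qed
  show "p = p' \<and> v = v'" using vv pp by simp
qed

lemma card_perms: "card (perms n) = fact n"
  unfolding perms_def by (rule card_permutations) auto

lemma finite_perms: "finite (perms n)"
  unfolding perms_def by (rule finite_permutations) auto

lemma id_perms: "id \<in> perms n" by (simp add: perms_def permutes_id)

lemma ext_image: "(\<lambda>(p,v). ext n p v) ` (perms n \<times> {1..Suc n}) = perms (Suc n)"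
proof (rule card_subset_eq)
  show "finite (perms (Suc n))" by (rule finite_perms)
  show "(\<lambda>(p,v). ext n p v) ` (perms n \<times> {1..Suc n}) \<subseteq> perms (Suc n)"
    using ext_permutes by (auto simp: perms_def)
  have "card ((\<lambda>(p,v). ext n p v) ` (perms n \<times> {1..Suc n})) = card (perms n \<times> {1..Suc n})"
    by (rule card_image[OF ext_inj])
  also have "\<dots> = fact n * Suc n" by (simp add: card_cartesian_product card_perms)
  also have "\<dots> = card (perms (Suc n))" by (simp add: card_perms)
  finally show "card ((\<lambda>(p,v). ext n p v) ` (perms n \<times> {1..Suc n})) = card (perms (Suc n))" .
qed

lemma sum_step: "(\<Sum>q\<in>perms (Suc n). f q) = (\<Sum>p\<in>perms n. \<Sum>v=1..Suc n. f (ext n p v))"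
proof -
  have "(\<Sum>q\<in>perms (Suc n). f q) = (\<Sum>x\<in>perms n \<times> {1..Suc n}. f ((\<lambda>(p,v). ext n p v) x))"
    by (subst ext_image[symmetric], rule sum.reindex[OF ext_inj, unfolded o_def])
  also have "\<dots> = (\<Sum>p\<in>perms n. \<Sum>v=1..Suc n. f (ext n p v))"
    by (simp only: sum.cartesian_product split_def)
  finally show ?thesis .
qed

lemma count_ge:
  assumes p: "p permutes {1..n}" and v: "v \<in> {1..Suc n}"
  shows "card {i\<in>{1..n}. v \<le> p i} = Suc n - v"
proof -
  define T where "T = {i\<in>{1..n}. v \<le> p i}"
  have "p ` T = {v..n}"
  proof (rule subset_antisym)
    show "p ` T \<subseteq> {v..n}"
    proof
      fix x assume "x \<in> p ` T"
      then obtain i where i: "i \<in> T" and xi: "x = p i" by blast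
      have "i \<in> {1..n}" "v \<le> p i" using i by (simp_all add: T_def)
      then have "p i \<in> {1..n}" using permutes_in_image[OF p, of i] by simp
      then show "x \<in> {v..n}" using xi \<open>v \<le> p i\<close> by simp
    qed
    show "{v..n} \<subseteq> p ` T"
    proof
      fix y assume y: "y \<in> {v..n}"
      have "y \<in> {1..n}" using y v by simp
      then have "y \<in> p ` {1..n}" by (simp only: permutes_image[OF p])
      then obtain i where i: "i \<in> {1..n}" and yi: "y = p i" by blast
      have "i \<in> T" using i yi y by (simp add: T_def)
      then show "y \<in> p ` T" using yi by blast
    qed
  qed
  moreover have "inj_on p T" by (rule permutes_inj_on[OF p])
  ultimately have "card {v..n} = card T" by (metis card_image)
  then show ?thesis by (simp add: T_def)
qed

lemma inv_ext:
  assumes p: "p \<in> perms n" and v: "v \<in> {1..Suc n}"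
  shows "inv_stat (Suc n) (ext n p v) = inv_stat n p + (Suc n - v)"
proof -
  have pp: "p permutes {1..n}" using p by (simp add: perms_def)
  have pin: "\<And>i. i \<in> {1..n} \<Longrightarrow> p i \<in> {1..n}" using permutes_in_image[OF pp] by blast
  define S1 where "S1 = {(i, j). 1 \<le> i \<and> i < j \<and> j \<le> n \<and> p i > p j}"
  define T where "T = {i\<in>{1..n}. v \<le> p i}"
  have eq: "{(i, j). 1 \<le> i \<and> i < j \<and> j \<le> Suc n \<and> ext n p v i > ext n p v j}
      = S1 \<union> (\<lambda>i. (i, Suc n)) ` T"
  proof (rule set_eqI, clarify)
    fix i j
    show "((i, j) \<in> {(i, j). 1 \<le> i \<and> i < j \<and> j \<le> Suc n \<and> ext n p v i > ext n p v j})
       = ((i, j) \<in> S1 \<union> (\<lambda>i. (i, Suc n)) ` T)"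
    proof (cases "j = Suc n")
      case True
      show ?thesis
      proof (cases "1 \<le> i \<and> i \<le> n")
        case True2: True
        have "ext n p v i = (if v \<le> p i then Suc (p i) else p i)" using True2 by (simp add: ext_def)
        moreover have "ext n p v j = v" using True by (simp add: ext_def)
        ultimately show ?thesis using True True2 by (auto simp: S1_def T_def)
      next
        case False
        then show ?thesis using True by (auto simp: S1_def T_def)
      qed
    next
      case False
      show ?thesis
      proof (cases "1 \<le> i \<and> i < j \<and> j \<le> n")
        case True
        have "ext n p v i = (if v \<le> p i then Suc (p i) else p i)" using True by (simp add: ext_def)
        moreover have "ext n p v j = (if v \<le> p j then Suc (p j) else p j)" using True by (simp add: ext_def)
        ultimately show ?thesis using True False by (auto simp: S1_def T_def)
      next
        case F2: False
        then show ?thesis using False by (auto simp: S1_def T_def)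
      qed
    qed
  qed
  have fin1: "finite S1"
    by (rule finite_subset[of _ "{1..n} \<times> {1..n}"]) (auto simp: S1_def)
  have "card (S1 \<union> (\<lambda>i. (i, Suc n)) ` T) = card S1 + card ((\<lambda>i. (i, Suc n)) ` T)"
    by (rule card_Un_disjoint[OF fin1]) (auto simp: T_def S1_def)
  also have "card ((\<lambda>i. (i, Suc n)) ` T) = card T"
    by (rule card_image) (auto intro: inj_onI)
  also have "card T = Suc n - v" unfolding T_def by (rule count_ge[OF pp v])
  finally have c: "card (S1 \<union> (\<lambda>i. (i, Suc n)) ` T) = card S1 + (Suc n - v)" .
  have "inv_stat (Suc n) (ext n p v) = card (S1 \<union> (\<lambda>i. (i, Suc n)) ` T)"
    unfolding inv_stat_def eq ..
  also have "\<dots> = inv_stat n p + (Suc n - v)" unfolding c by (simp add: inv_stat_def S1_def)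
  finally show ?thesis .
qed

lemma maj_ext:
  assumes p: "p \<in> perms n" and v: "v \<in> {1..Suc n}"
  shows "maj_stat (Suc n) (ext n p v) = maj_stat n p + (if v \<le> p n then n else 0)"
proof -
  have pp: "p permutes {1..n}" using p by (simp add: perms_def)
  define D where "D = {i \<in> {1..<n}. p i > p (Suc i)}"
  have eq: "{i \<in> {1..<Suc n}. ext n p v i > ext n p v (Suc i)} = D \<union> (if v \<le> p n then {n} else {})"
  proof (rule set_eqI)
    fix i
    show "(i \<in> {i \<in> {1..<Suc n}. ext n p v i > ext n p v (Suc i)}) = (i \<in> D \<union> (if v \<le> p n then {n} else {}))"
    proof (cases "1 \<le> i \<and> i < n")
      case True
      have "ext n p v i = (if v \<le> p i then Suc (p i) else p i)" using True by (simp add: ext_def)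
      moreover have "ext n p v (Suc i) = (if v \<le> p (Suc i) then Suc (p (Suc i)) else p (Suc i))" using True by (simp add: ext_def)
      ultimately show ?thesis using True by (auto simp: D_def)
    next
      case False
      show ?thesis
      proof (cases "i = n \<and> n \<ge> 1")
        case True
        have "ext n p v i = (if v \<le> p i then Suc (p i) else p i)" using True by (simp add: ext_def)
        moreover have "ext n p v (Suc i) = v" using True by (simp add: ext_def)
        ultimately show ?thesis using True by (auto simp: D_def)
      next
        case F2: False
        have h: "\<not> (n = 0 \<and> v \<le> p n)" using permutes_not_in[OF pp, of 0] v by auto
        then show ?thesis using False F2 v by (auto simp: D_def)
      qed
    qed
  qed
  have fin: "finite D" by (simp add: D_def)
  have "maj_stat (Suc n) (ext n p v) = sum (\<lambda>i. i) (D \<union> (if v \<le> p n then {n} else {}))"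
    unfolding maj_stat_def eq ..
  also have "\<dots> = sum (\<lambda>i. i) D + (if v \<le> p n then n else 0)"
    using fin by (auto simp: D_def)
  also have "sum (\<lambda>i. i) D = maj_stat n p" by (simp add: maj_stat_def D_def)
  finally show ?thesis .
qed

lemma psum1: "(\<Sum>v=1..m. real v) = real m * (real m + 1) / 2"
  by (induction m) (simp_all add: field_simps)

lemma psum2: "(\<Sum>v=1..m. real v ^ 2) = real m * (real m + 1) * (2 * real m + 1) / 6"
  by (induction m) (simp_all add: field_simps power2_eq_square)

lemma psum0: "(\<Sum>v=1..m. (1::real)) = real m" by simp

lemma ind_sum:
  fixes m w :: nat
  assumes "w \<le> m"
  shows "(\<Sum>v=1..m. (if v \<le> w then g v else (0::real))) = (\<Sum>v=1..w. g v)"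
proof -
  have "(\<Sum>v=1..m. (if v \<le> w then g v else (0::real))) = (\<Sum>v\<in>{1..m} \<inter> {v. v \<le> w}. g v)"
    by (subst sum.inter_restrict) auto
  also have "{1..m} \<inter> {v. v \<le> w} = {1..w}" using assms by auto
  finally show ?thesis .
qed

lemma gsum:
  assumes "w \<le> Suc n"
  shows "(\<Sum>v=1..Suc n. c0 + c1 * real v + c2 * real v ^ 2 + (if v \<le> w then d0 + d1 * real v else 0))
    = c0 * (real n + 1) + c1 * ((real n + 1) * (real n + 2) / 2)
      + c2 * ((real n + 1) * (real n + 2) * (2 * real n + 3) / 6)
      + d0 * real w + d1 * (real w * (real w + 1) / 2)"
proof -
  have "(\<Sum>v=1..Suc n. c0 + c1 * real v + c2 * real v ^ 2 + (if v \<le> w then d0 + d1 * real v else 0))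
     = (\<Sum>v=1..Suc n. c0) + c1 * (\<Sum>v=1..Suc n. real v) + c2 * (\<Sum>v=1..Suc n. real v ^ 2)
       + (\<Sum>v=1..Suc n. (if v \<le> w then d0 + d1 * real v else 0))"
    by (simp only: sum.distrib sum_distrib_left)
  also have "(\<Sum>v=1..Suc n. (if v \<le> w then d0 + d1 * real v else 0)) = (\<Sum>v=1..w. d0 + d1 * real v)"
    by (rule ind_sum[OF assms])
  also have "\<dots> = d0 * real w + d1 * (\<Sum>v=1..w. real v)"
    by (simp only: sum.distrib sum_distrib_left) simp
  finally show ?thesis unfolding psum1 psum2 by (simp add: field_simps)
qed

definition "Xs n p = real (inv_stat n p)"
definition "Ys n p = real (maj_stat n p)"
definition "Ws n p = real (p n)"

lemma pn_le: assumes "p \<in> perms n" shows "p n \<le> n"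
proof (cases "n = 0")
  case True then show ?thesis using assms permutes_not_in[of p "{1..n}" 0] by (simp add: perms_def)
next
  case False
  then have "n \<in> {1..n}" by auto
  then have "p n \<in> {1..n}" using assms permutes_in_image[of p "{1..n}" n] by (simp add: perms_def)
  then show ?thesis by simp
qed

lemma Xs_ext: "p \<in> perms n \<Longrightarrow> v \<in> {1..Suc n} \<Longrightarrow> Xs (Suc n) (ext n p v) = Xs n p + real n + 1 - real v"
  by (simp add: Xs_def inv_ext of_nat_diff)

lemma Ys_ext: "p \<in> perms n \<Longrightarrow> v \<in> {1..Suc n} \<Longrightarrow> Ys (Suc n) (ext n p v) = Ys n p + (if v \<le> p n then real n else 0)"
  by (simp add: Ys_def maj_ext)

lemma Ws_ext: "Ws (Suc n) (ext n p v) = real v"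
  by (simp add: Ws_def ext_last)

lemma inner:
  assumes p: "p \<in> perms n"
    and f: "\<And>v. v \<in> {1..Suc n} \<Longrightarrow> f v = c0 + c1 * real v + c2 * real v ^ 2 + (if v \<le> p n then d0 + d1 * real v else 0)"
  shows "(\<Sum>v=1..Suc n. f v) = c0 * (real n + 1) + c1 * ((real n + 1) * (real n + 2) / 2)
      + c2 * ((real n + 1) * (real n + 2) * (2 * real n + 3) / 6)
      + d0 * Ws n p + d1 * (Ws n p * (Ws n p + 1) / 2)"
proof -
  have "(\<Sum>v=1..Suc n. f v) = (\<Sum>v=1..Suc n. c0 + c1 * real v + c2 * real v ^ 2 + (if v \<le> p n then d0 + d1 * real v else 0))"
    by (rule sum.cong[OF refl]) (rule f)
  also have "\<dots> = c0 * (real n + 1) + c1 * ((real n + 1) * (real n + 2) / 2)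
      + c2 * ((real n + 1) * (real n + 2) * (2 * real n + 3) / 6)
      + d0 * real (p n) + d1 * (real (p n) * (real (p n) + 1) / 2)" by (rule gsum) (use pn_le[OF p] in simp)
  finally show ?thesis by (simp add: Ws_def)
qed

definition "QA n = (\<Sum>p\<in>perms n. Xs n p)"
definition "QB n = (\<Sum>p\<in>perms n. Ys n p)"
definition "QC n = (\<Sum>p\<in>perms n. Xs n p ^ 2)"
definition "QD n = (\<Sum>p\<in>perms n. Ys n p ^ 2)"
definition "QF n = (\<Sum>p\<in>perms n. Xs n p * Ys n p)"
definition "QG n = (\<Sum>p\<in>perms n. Xs n p * Ws n p)"
definition "QH n = (\<Sum>p\<in>perms n. Ys n p * Ws n p)"
definition "QW1 n = (\<Sum>p\<in>perms n. Ws n p)"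
definition "QW2 n = (\<Sum>p\<in>perms n. Ws n p ^ 2)"

lemma sum_const_perms: "(\<Sum>p\<in>perms n. (c::real)) = fact n * c"
  by (simp add: card_perms)

lemma recA: "QA (Suc n) = (real n + 1) * QA n + fact n * ((real n + 1) * real n / 2)"
proof -
  have "QA (Suc n) = (\<Sum>p\<in>perms n. \<Sum>v=1..Suc n. Xs (Suc n) (ext n p v))" unfolding QA_def by (rule sum_step)
  also have "\<dots> = (\<Sum>p\<in>perms n. (real n + 1) * Xs n p + (real n + 1) * real n / 2)"
  proof (rule sum.cong[OF refl])
    fix p assume p: "p \<in> perms n"
    have "(\<Sum>v=1..Suc n. Xs (Suc n) (ext n p v)) = (Xs n p + real n + 1) * (real n + 1) + (-1) * ((real n + 1) * (real n + 2) / 2)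
      + 0 * ((real n + 1) * (real n + 2) * (2 * real n + 3) / 6)
      + 0 * Ws n p + 0 * (Ws n p * (Ws n p + 1) / 2)"
      by (rule inner[OF p]) (simp add: Xs_ext[OF p])
    also have "\<dots> = (real n + 1) * Xs n p + (real n + 1) * real n / 2" by (simp add: field_simps)
    finally show "(\<Sum>v=1..Suc n. Xs (Suc n) (ext n p v)) = (real n + 1) * Xs n p + (real n + 1) * real n / 2" .
  qed
  also have "\<dots> = (real n + 1) * QA n + fact n * ((real n + 1) * real n / 2)"
    by (simp add: QA_def QB_def QC_def QD_def QF_def QG_def QH_def QW1_def QW2_def sum.distrib sum_subtractf sum_negf sum_distrib_left sum_divide_distrib card_perms)
  finally show ?thesis .
qed

lemma recB: "QB (Suc n) = (real n + 1) * QB n + real n * QW1 n"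
proof -
  have "QB (Suc n) = (\<Sum>p\<in>perms n. \<Sum>v=1..Suc n. Ys (Suc n) (ext n p v))" unfolding QB_def by (rule sum_step)
  also have "\<dots> = (\<Sum>p\<in>perms n. (real n + 1) * Ys n p + real n * Ws n p)"
  proof (rule sum.cong[OF refl])
    fix p assume p: "p \<in> perms n"
    have "(\<Sum>v=1..Suc n. Ys (Suc n) (ext n p v)) = (Ys n p) * (real n + 1) + (0) * ((real n + 1) * (real n + 2) / 2)
      + (0) * ((real n + 1) * (real n + 2) * (2 * real n + 3) / 6)
      + (real n) * Ws n p + (0) * (Ws n p * (Ws n p + 1) / 2)"
      by (rule inner[OF p]) (cases "v \<le> p n"; simp add: Xs_ext[OF p] Ys_ext[OF p] Ws_ext algebra_simps power2_eq_square)
    also have "\<dots> = (real n + 1) * Ys n p + real n * Ws n p" by (simp add: field_simps power2_eq_square)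
    finally show "(\<Sum>v=1..Suc n. Ys (Suc n) (ext n p v)) = (real n + 1) * Ys n p + real n * Ws n p" .
  qed
  also have "\<dots> = (real n + 1) * QB n + real n * QW1 n"
    by (simp add: QA_def QB_def QC_def QD_def QF_def QG_def QH_def QW1_def QW2_def sum.distrib sum_subtractf sum_negf sum_distrib_left sum_divide_distrib card_perms)
  finally show ?thesis .
qed

lemma recC: "QC (Suc n) = (real n + 1) * QC n + (real n * (real n + 1)) * QA n + fact n * (real n * (real n + 1) * (2 * real n + 1) / 6)"
proof -
  have "QC (Suc n) = (\<Sum>p\<in>perms n. \<Sum>v=1..Suc n. Xs (Suc n) (ext n p v) ^ 2)" unfolding QC_def by (rule sum_step)
  also have "\<dots> = (\<Sum>p\<in>perms n. (real n + 1) * Xs n p^2 + (real n * (real n + 1)) * Xs n p + real n * (real n + 1) * (2 * real n + 1) / 6)"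
  proof (rule sum.cong[OF refl])
    fix p assume p: "p \<in> perms n"
    have "(\<Sum>v=1..Suc n. Xs (Suc n) (ext n p v) ^ 2) = ((Xs n p + real n + 1)^2) * (real n + 1) + (-2 * (Xs n p + real n + 1)) * ((real n + 1) * (real n + 2) / 2)
      + (1) * ((real n + 1) * (real n + 2) * (2 * real n + 3) / 6)
      + (0) * Ws n p + (0) * (Ws n p * (Ws n p + 1) / 2)"
      by (rule inner[OF p]) (cases "v \<le> p n"; simp add: Xs_ext[OF p] Ys_ext[OF p] Ws_ext algebra_simps power2_eq_square)
    also have "\<dots> = (real n + 1) * Xs n p^2 + (real n * (real n + 1)) * Xs n p + real n * (real n + 1) * (2 * real n + 1) / 6" by (simp add: field_simps power2_eq_square)
    finally show "(\<Sum>v=1..Suc n. Xs (Suc n) (ext n p v) ^ 2) = (real n + 1) * Xs n p^2 + (real n * (real n + 1)) * Xs n p + real n * (real n + 1) * (2 * real n + 1) / 6" .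
  qed
  also have "\<dots> = (real n + 1) * QC n + (real n * (real n + 1)) * QA n + fact n * (real n * (real n + 1) * (2 * real n + 1) / 6)"
    by (simp add: QA_def QB_def QC_def QD_def QF_def QG_def QH_def QW1_def QW2_def sum.distrib sum_subtractf sum_negf sum_distrib_left sum_divide_distrib card_perms)
  finally show ?thesis .
qed

lemma recD: "QD (Suc n) = (real n + 1) * QD n + (2 * real n) * QH n + real n^2 * QW1 n"
proof -
  have "QD (Suc n) = (\<Sum>p\<in>perms n. \<Sum>v=1..Suc n. Ys (Suc n) (ext n p v) ^ 2)" unfolding QD_def by (rule sum_step)
  also have "\<dots> = (\<Sum>p\<in>perms n. (real n + 1) * Ys n p^2 + (2 * real n) * (Ys n p * Ws n p) + real n^2 * Ws n p)"
  proof (rule sum.cong[OF refl])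
    fix p assume p: "p \<in> perms n"
    have "(\<Sum>v=1..Suc n. Ys (Suc n) (ext n p v) ^ 2) = (Ys n p^2) * (real n + 1) + (0) * ((real n + 1) * (real n + 2) / 2)
      + (0) * ((real n + 1) * (real n + 2) * (2 * real n + 3) / 6)
      + (2 * real n * Ys n p + real n^2) * Ws n p + (0) * (Ws n p * (Ws n p + 1) / 2)"
      by (rule inner[OF p]) (cases "v \<le> p n"; simp add: Xs_ext[OF p] Ys_ext[OF p] Ws_ext algebra_simps power2_eq_square)
    also have "\<dots> = (real n + 1) * Ys n p^2 + (2 * real n) * (Ys n p * Ws n p) + real n^2 * Ws n p" by (simp add: field_simps power2_eq_square)
    finally show "(\<Sum>v=1..Suc n. Ys (Suc n) (ext n p v) ^ 2) = (real n + 1) * Ys n p^2 + (2 * real n) * (Ys n p * Ws n p) + real n^2 * Ws n p" .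
  qed
  also have "\<dots> = (real n + 1) * QD n + (2 * real n) * QH n + real n^2 * QW1 n"
    by (simp add: QA_def QB_def QC_def QD_def QF_def QG_def QH_def QW1_def QW2_def sum.distrib sum_subtractf sum_negf sum_distrib_left sum_divide_distrib card_perms)
  finally show ?thesis .
qed

lemma recF: "QF (Suc n) = (real n + 1) * QF n + real n * QG n + (real n * (real n + 1) / 2) * QB n + (real n * (real n + 1) - real n / 2) * QW1 n + (- real n / 2) * QW2 n"
proof -
  have "QF (Suc n) = (\<Sum>p\<in>perms n. \<Sum>v=1..Suc n. Xs (Suc n) (ext n p v) * Ys (Suc n) (ext n p v))" unfolding QF_def by (rule sum_step)
  also have "\<dots> = (\<Sum>p\<in>perms n. (real n + 1) * (Xs n p * Ys n p) + real n * (Xs n p * Ws n p) + (real n * (real n + 1) / 2) * Ys n p + (real n * (real n + 1) - real n / 2) * Ws n p + (- real n / 2) * Ws n p^2)"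
  proof (rule sum.cong[OF refl])
    fix p assume p: "p \<in> perms n"
    have "(\<Sum>v=1..Suc n. Xs (Suc n) (ext n p v) * Ys (Suc n) (ext n p v)) = ((Xs n p + real n + 1) * Ys n p) * (real n + 1) + (- Ys n p) * ((real n + 1) * (real n + 2) / 2)
      + (0) * ((real n + 1) * (real n + 2) * (2 * real n + 3) / 6)
      + (real n * (Xs n p + real n + 1)) * Ws n p + (- real n) * (Ws n p * (Ws n p + 1) / 2)"
      by (rule inner[OF p]) (cases "v \<le> p n"; simp add: Xs_ext[OF p] Ys_ext[OF p] Ws_ext algebra_simps power2_eq_square)
    also have "\<dots> = (real n + 1) * (Xs n p * Ys n p) + real n * (Xs n p * Ws n p) + (real n * (real n + 1) / 2) * Ys n p + (real n * (real n + 1) - real n / 2) * Ws n p + (- real n / 2) * Ws n p^2" by (simp add: field_simps power2_eq_square)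
    finally show "(\<Sum>v=1..Suc n. Xs (Suc n) (ext n p v) * Ys (Suc n) (ext n p v)) = (real n + 1) * (Xs n p * Ys n p) + real n * (Xs n p * Ws n p) + (real n * (real n + 1) / 2) * Ys n p + (real n * (real n + 1) - real n / 2) * Ws n p + (- real n / 2) * Ws n p^2" .
  qed
  also have "\<dots> = (real n + 1) * QF n + real n * QG n + (real n * (real n + 1) / 2) * QB n + (real n * (real n + 1) - real n / 2) * QW1 n + (- real n / 2) * QW2 n"
    by (simp add: QA_def QB_def QC_def QD_def QF_def QG_def QH_def QW1_def QW2_def sum.distrib sum_subtractf sum_negf sum_distrib_left sum_divide_distrib card_perms)
  finally show ?thesis .
qed

lemma recG: "QG (Suc n) = ((real n + 1) * (real n + 2) / 2) * QA n + fact n * ((real n + 1)^2 * (real n + 2) / 2 - (real n + 1) * (real n + 2) * (2 * real n + 3) / 6)"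
proof -
  have "QG (Suc n) = (\<Sum>p\<in>perms n. \<Sum>v=1..Suc n. Xs (Suc n) (ext n p v) * Ws (Suc n) (ext n p v))" unfolding QG_def by (rule sum_step)
  also have "\<dots> = (\<Sum>p\<in>perms n. ((real n + 1) * (real n + 2) / 2) * Xs n p + ((real n + 1)^2 * (real n + 2) / 2 - (real n + 1) * (real n + 2) * (2 * real n + 3) / 6))"
  proof (rule sum.cong[OF refl])
    fix p assume p: "p \<in> perms n"
    have "(\<Sum>v=1..Suc n. Xs (Suc n) (ext n p v) * Ws (Suc n) (ext n p v)) = (0) * (real n + 1) + (Xs n p + real n + 1) * ((real n + 1) * (real n + 2) / 2)
      + (-1) * ((real n + 1) * (real n + 2) * (2 * real n + 3) / 6)
      + (0) * Ws n p + (0) * (Ws n p * (Ws n p + 1) / 2)"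
      by (rule inner[OF p]) (cases "v \<le> p n"; simp add: Xs_ext[OF p] Ys_ext[OF p] Ws_ext algebra_simps power2_eq_square)
    also have "\<dots> = ((real n + 1) * (real n + 2) / 2) * Xs n p + ((real n + 1)^2 * (real n + 2) / 2 - (real n + 1) * (real n + 2) * (2 * real n + 3) / 6)" by (simp add: field_simps power2_eq_square)
    finally show "(\<Sum>v=1..Suc n. Xs (Suc n) (ext n p v) * Ws (Suc n) (ext n p v)) = ((real n + 1) * (real n + 2) / 2) * Xs n p + ((real n + 1)^2 * (real n + 2) / 2 - (real n + 1) * (real n + 2) * (2 * real n + 3) / 6)" .
  qed
  also have "\<dots> = ((real n + 1) * (real n + 2) / 2) * QA n + fact n * ((real n + 1)^2 * (real n + 2) / 2 - (real n + 1) * (real n + 2) * (2 * real n + 3) / 6)"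
    by (simp add: QA_def QB_def QC_def QD_def QF_def QG_def QH_def QW1_def QW2_def sum.distrib sum_subtractf sum_negf sum_distrib_left sum_divide_distrib card_perms)
  finally show ?thesis .
qed

lemma recH: "QH (Suc n) = ((real n + 1) * (real n + 2) / 2) * QB n + (real n / 2) * QW1 n + (real n / 2) * QW2 n"
proof -
  have "QH (Suc n) = (\<Sum>p\<in>perms n. \<Sum>v=1..Suc n. Ys (Suc n) (ext n p v) * Ws (Suc n) (ext n p v))" unfolding QH_def by (rule sum_step)
  also have "\<dots> = (\<Sum>p\<in>perms n. ((real n + 1) * (real n + 2) / 2) * Ys n p + (real n / 2) * Ws n p + (real n / 2) * Ws n p^2)"
  proof (rule sum.cong[OF refl])
    fix p assume p: "p \<in> perms n"
    have "(\<Sum>v=1..Suc n. Ys (Suc n) (ext n p v) * Ws (Suc n) (ext n p v)) = (0) * (real n + 1) + (Ys n p) * ((real n + 1) * (real n + 2) / 2)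
      + (0) * ((real n + 1) * (real n + 2) * (2 * real n + 3) / 6)
      + (0) * Ws n p + (real n) * (Ws n p * (Ws n p + 1) / 2)"
      by (rule inner[OF p]) (cases "v \<le> p n"; simp add: Xs_ext[OF p] Ys_ext[OF p] Ws_ext algebra_simps power2_eq_square)
    also have "\<dots> = ((real n + 1) * (real n + 2) / 2) * Ys n p + (real n / 2) * Ws n p + (real n / 2) * Ws n p^2" by (simp add: field_simps power2_eq_square)
    finally show "(\<Sum>v=1..Suc n. Ys (Suc n) (ext n p v) * Ws (Suc n) (ext n p v)) = ((real n + 1) * (real n + 2) / 2) * Ys n p + (real n / 2) * Ws n p + (real n / 2) * Ws n p^2" .
  qed
  also have "\<dots> = ((real n + 1) * (real n + 2) / 2) * QB n + (real n / 2) * QW1 n + (real n / 2) * QW2 n"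
    by (simp add: QA_def QB_def QC_def QD_def QF_def QG_def QH_def QW1_def QW2_def sum.distrib sum_subtractf sum_negf sum_distrib_left sum_divide_distrib card_perms)
  finally show ?thesis .
qed

lemma recW1: "QW1 (Suc n) = fact n * ((real n + 1) * (real n + 2) / 2)"
proof -
  have "QW1 (Suc n) = (\<Sum>p\<in>perms n. \<Sum>v=1..Suc n. Ws (Suc n) (ext n p v))" unfolding QW1_def by (rule sum_step)
  also have "\<dots> = (\<Sum>p\<in>perms n. (real n + 1) * (real n + 2) / 2)"
  proof (rule sum.cong[OF refl])
    fix p assume p: "p \<in> perms n"
    have "(\<Sum>v=1..Suc n. Ws (Suc n) (ext n p v)) = (0) * (real n + 1) + (1) * ((real n + 1) * (real n + 2) / 2)
      + (0) * ((real n + 1) * (real n + 2) * (2 * real n + 3) / 6)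
      + (0) * Ws n p + (0) * (Ws n p * (Ws n p + 1) / 2)"
      by (rule inner[OF p]) (cases "v \<le> p n"; simp add: Xs_ext[OF p] Ys_ext[OF p] Ws_ext algebra_simps power2_eq_square)
    also have "\<dots> = (real n + 1) * (real n + 2) / 2" by (simp add: field_simps power2_eq_square)
    finally show "(\<Sum>v=1..Suc n. Ws (Suc n) (ext n p v)) = (real n + 1) * (real n + 2) / 2" .
  qed
  also have "\<dots> = fact n * ((real n + 1) * (real n + 2) / 2)"
    by (simp add: QA_def QB_def QC_def QD_def QF_def QG_def QH_def QW1_def QW2_def sum.distrib sum_subtractf sum_negf sum_distrib_left sum_divide_distrib card_perms)
  finally show ?thesis .
qed

lemma recW2: "QW2 (Suc n) = fact n * ((real n + 1) * (real n + 2) * (2 * real n + 3) / 6)"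
proof -
  have "QW2 (Suc n) = (\<Sum>p\<in>perms n. \<Sum>v=1..Suc n. Ws (Suc n) (ext n p v) ^ 2)" unfolding QW2_def by (rule sum_step)
  also have "\<dots> = (\<Sum>p\<in>perms n. (real n + 1) * (real n + 2) * (2 * real n + 3) / 6)"
  proof (rule sum.cong[OF refl])
    fix p assume p: "p \<in> perms n"
    have "(\<Sum>v=1..Suc n. Ws (Suc n) (ext n p v) ^ 2) = (0) * (real n + 1) + (0) * ((real n + 1) * (real n + 2) / 2)
      + (1) * ((real n + 1) * (real n + 2) * (2 * real n + 3) / 6)
      + (0) * Ws n p + (0) * (Ws n p * (Ws n p + 1) / 2)"
      by (rule inner[OF p]) (cases "v \<le> p n"; simp add: Xs_ext[OF p] Ys_ext[OF p] Ws_ext algebra_simps power2_eq_square)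
    also have "\<dots> = (real n + 1) * (real n + 2) * (2 * real n + 3) / 6" by (simp add: field_simps power2_eq_square)
    finally show "(\<Sum>v=1..Suc n. Ws (Suc n) (ext n p v) ^ 2) = (real n + 1) * (real n + 2) * (2 * real n + 3) / 6" .
  qed
  also have "\<dots> = fact n * ((real n + 1) * (real n + 2) * (2 * real n + 3) / 6)"
    by (simp add: QA_def QB_def QC_def QD_def QF_def QG_def QH_def QW1_def QW2_def sum.distrib sum_subtractf sum_negf sum_distrib_left sum_divide_distrib card_perms)
  finally show ?thesis .
qed

lemma perms0: "perms 0 = {id}" by (auto simp: perms_def)

lemma inv0: "inv_stat 0 p = 0"
proof -
  have "{(i, j). 1 \<le> i \<and> i < j \<and> j \<le> (0::nat) \<and> p i > p j} = {}" by auto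
  then show ?thesis unfolding inv_stat_def by (metis card.empty)
qed

lemma zeros: "QA 0 = 0" "QB 0 = 0" "QC 0 = 0" "QD 0 = 0" "QF 0 = 0" "QG 0 = 0" "QH 0 = 0" "QW1 0 = 0" "QW2 0 = 0"
  by (simp_all add: QA_def QB_def QC_def QD_def QF_def QG_def QH_def QW1_def QW2_def perms0
      Xs_def Ys_def Ws_def inv0 maj_stat_def)


definition "fA (a::real) = a * (a - 1) / 4"
definition "fC (a::real) = (9*a^4 - 14*a^3 + 15*a^2 - 10*a) / 144"
definition "fF (a::real) = (9*a^4 - 18*a^3 + 27*a^2 - 18*a) / 144"
definition "fG (a::real) = (3*a^3 - 2*a^2 - 3*a + 2) / 24"
definition "fW1 (a::real) = (a + 1) / 2"
definition "fW2 (a::real) = (a + 1) * (2*a + 1) / 6"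

definition "P n \<longleftrightarrow> QA n = fact n * fA (real n) \<and> QB n = fact n * fA (real n)
   \<and> QC n = fact n * fC (real n) \<and> QD n = fact n * fC (real n) \<and> QF n = fact n * fF (real n)
   \<and> QG n = fact n * fG (real n) \<and> QH n = fact n * fG (real n)
   \<and> QW1 n = fact n * fW1 (real n) \<and> QW2 n = fact n * fW2 (real n)"

lemma P1: "P 1"
  using recA[of 0] recB[of 0] recC[of 0] recD[of 0] recF[of 0] recG[of 0] recH[of 0] recW1[of 0] recW2[of 0]
  by (simp add: P_def zeros fA_def fC_def fF_def fG_def fW1_def fW2_def)

lemma stA:
  assumes "QA n = fact n * fA (real n)"
  shows "QA (Suc n) = fact (Suc n) * fA (real (Suc n))"
proof -
  have f: "fact (Suc n) = (real n + 1) * fact n" by (simp add: algebra_simps)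
  have r: "real (Suc n) = real n + 1" by simp
  show ?thesis unfolding recA f r assms fA_def fC_def fF_def fG_def fW1_def fW2_def
    by (simp add: field_simps power2_eq_square power3_eq_cube power4_eq_xxxx; simp add: algebra_simps)
qed

lemma stB:
  assumes "QB n = fact n * fA (real n)" and "QW1 n = fact n * fW1 (real n)"
  shows "QB (Suc n) = fact (Suc n) * fA (real (Suc n))"
proof -
  have f: "fact (Suc n) = (real n + 1) * fact n" by (simp add: algebra_simps)
  have r: "real (Suc n) = real n + 1" by simp
  show ?thesis unfolding recB f r assms fA_def fC_def fF_def fG_def fW1_def fW2_def
    by (simp add: field_simps power2_eq_square power3_eq_cube power4_eq_xxxx; simp add: algebra_simps)
qed

lemma stC:
  assumes "QA n = fact n * fA (real n)" and "QC n = fact n * fC (real n)"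
  shows "QC (Suc n) = fact (Suc n) * fC (real (Suc n))"
proof -
  have f: "fact (Suc n) = (real n + 1) * fact n" by (simp add: algebra_simps)
  have r: "real (Suc n) = real n + 1" by simp
  show ?thesis unfolding recC f r assms fA_def fC_def fF_def fG_def fW1_def fW2_def
    by (simp add: field_simps power2_eq_square power3_eq_cube power4_eq_xxxx; simp add: algebra_simps)
qed

lemma stD:
  assumes "QD n = fact n * fC (real n)" and "QH n = fact n * fG (real n)" and "QW1 n = fact n * fW1 (real n)"
  shows "QD (Suc n) = fact (Suc n) * fC (real (Suc n))"
proof -
  have f: "fact (Suc n) = (real n + 1) * fact n" by (simp add: algebra_simps)
  have r: "real (Suc n) = real n + 1" by simp
  show ?thesis unfolding recD f r assms fA_def fC_def fF_def fG_def fW1_def fW2_def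
    by (simp add: field_simps power2_eq_square power3_eq_cube power4_eq_xxxx; simp add: algebra_simps)
qed

lemma stF:
  assumes "QB n = fact n * fA (real n)" and "QF n = fact n * fF (real n)" and "QG n = fact n * fG (real n)" and "QW1 n = fact n * fW1 (real n)" and "QW2 n = fact n * fW2 (real n)"
  shows "QF (Suc n) = fact (Suc n) * fF (real (Suc n))"
proof -
  have f: "fact (Suc n) = (real n + 1) * fact n" by (simp add: algebra_simps)
  have r: "real (Suc n) = real n + 1" by simp
  show ?thesis unfolding recF f r assms fA_def fC_def fF_def fG_def fW1_def fW2_def
    by (simp add: field_simps power2_eq_square power3_eq_cube power4_eq_xxxx; simp add: algebra_simps)
qed

lemma stG:
  assumes "QA n = fact n * fA (real n)"
  shows "QG (Suc n) = fact (Suc n) * fG (real (Suc n))"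
proof -
  have f: "fact (Suc n) = (real n + 1) * fact n" by (simp add: algebra_simps)
  have r: "real (Suc n) = real n + 1" by simp
  show ?thesis unfolding recG f r assms fA_def fC_def fF_def fG_def fW1_def fW2_def
    by (simp add: field_simps power2_eq_square power3_eq_cube power4_eq_xxxx; simp add: algebra_simps)
qed

lemma stH:
  assumes "QB n = fact n * fA (real n)" and "QW1 n = fact n * fW1 (real n)" and "QW2 n = fact n * fW2 (real n)"
  shows "QH (Suc n) = fact (Suc n) * fG (real (Suc n))"
proof -
  have f: "fact (Suc n) = (real n + 1) * fact n" by (simp add: algebra_simps)
  have r: "real (Suc n) = real n + 1" by simp
  show ?thesis unfolding recH f r assms fA_def fC_def fF_def fG_def fW1_def fW2_def
    by (simp add: field_simps power2_eq_square power3_eq_cube power4_eq_xxxx; simp add: algebra_simps)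
qed

lemma stW1:
  
  shows "QW1 (Suc n) = fact (Suc n) * fW1 (real (Suc n))"
proof -
  have f: "fact (Suc n) = (real n + 1) * fact n" by (simp add: algebra_simps)
  have r: "real (Suc n) = real n + 1" by simp
  show ?thesis unfolding recW1 f r fA_def fC_def fF_def fG_def fW1_def fW2_def
    by (simp add: field_simps power2_eq_square power3_eq_cube power4_eq_xxxx; simp add: algebra_simps)
qed

lemma stW2:
  
  shows "QW2 (Suc n) = fact (Suc n) * fW2 (real (Suc n))"
proof -
  have f: "fact (Suc n) = (real n + 1) * fact n" by (simp add: algebra_simps)
  have r: "real (Suc n) = real n + 1" by simp
  show ?thesis unfolding recW2 f r fA_def fC_def fF_def fG_def fW1_def fW2_def
    by (simp add: field_simps power2_eq_square power3_eq_cube power4_eq_xxxx; simp add: algebra_simps)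
qed

lemma Pstep: assumes "P n" shows "P (Suc n)"
  using assms unfolding P_def
  by (intro conjI stA stB stC stD stF stG stH stW1 stW2; simp)

lemma Pall: "n \<ge> 1 \<Longrightarrow> P n"
proof (induction n rule: dec_induct)
  case base
  show ?case by (rule P1)
next
  case (step m)
  then show ?case using Pstep by blast
qed

lemma expect:
  fixes f :: "(nat \<Rightarrow> nat) \<Rightarrow> real"
  shows "measure_pmf.expectation (unif_perm n) f = (\<Sum>p\<in>perms n. f p) / fact n"
proof -
  have ne: "perms n \<noteq> {}" using id_perms by auto
  show ?thesis unfolding unif_perm_def
    by (subst integral_pmf_of_set[OF ne finite_perms]) (simp add: card_perms)
qed

lemma cov_gen:
  fixes f g :: "'a \<Rightarrow> real"
  shows "(\<Sum>p\<in>S. (f p - a) * (g p - b)) = (\<Sum>p\<in>S. f p * g p) - b * (\<Sum>p\<in>S. f p) - a * (\<Sum>p\<in>S. g p) + real (card S) * a * b"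
  by (simp add: algebra_simps sum.distrib sum_subtractf sum_distrib_left)

lemma cov_formula:
  fixes f g :: "(nat \<Rightarrow> nat) \<Rightarrow> real"
  shows "covariance (unif_perm n) f g
   = (\<Sum>p\<in>perms n. f p * g p) / fact n - ((\<Sum>p\<in>perms n. f p) / fact n) * ((\<Sum>p\<in>perms n. g p) / fact n)"
proof -
  have N: "(fact n :: real) > 0" by simp
  show ?thesis
    unfolding covariance_def expect cov_gen card_perms
    using N by (simp add: field_simps power2_eq_square)
qed

lemma var_formula:
  fixes f :: "(nat \<Rightarrow> nat) \<Rightarrow> real"
  shows "measure_pmf.variance (unif_perm n) f
   = (\<Sum>p\<in>perms n. f p ^ 2) / fact n - ((\<Sum>p\<in>perms n. f p) / fact n) ^ 2"
proof -
  have "measure_pmf.variance (unif_perm n) f = covariance (unif_perm n) f f"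
    by (simp add: covariance_def power2_eq_square)
  then show ?thesis by (simp add: cov_formula power2_eq_square)
qed

lemma sums_fold:
  "(\<Sum>p\<in>perms n. real (inv_stat n p)) = QA n"
  "(\<Sum>p\<in>perms n. real (maj_stat n p)) = QB n"
  "(\<Sum>p\<in>perms n. real (inv_stat n p) ^ 2) = QC n"
  "(\<Sum>p\<in>perms n. real (maj_stat n p) ^ 2) = QD n"
  "(\<Sum>p\<in>perms n. real (inv_stat n p) * real (maj_stat n p)) = QF n"
  by (simp_all add: QA_def QB_def QC_def QD_def QF_def Xs_def Ys_def)

lemma cov_val: assumes "n \<ge> 1"
  shows "covariance (unif_perm n) (\<lambda>p. real (inv_stat n p)) (\<lambda>p. real (maj_stat n p)) = real n * (real n - 1) / 8"
proof -
  have h: "P n" by (rule Pall[OF assms])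
  have N: "(fact n :: real) \<noteq> 0" by simp
  have "covariance (unif_perm n) (\<lambda>p. real (inv_stat n p)) (\<lambda>p. real (maj_stat n p))
     = fF (real n) - fA (real n) * fA (real n)"
    unfolding cov_formula sums_fold using h N unfolding P_def by simp
  also have "\<dots> = real n * (real n - 1) / 8"
    by (simp add: fA_def fF_def field_simps power2_eq_square power3_eq_cube power4_eq_xxxx; simp add: algebra_simps)
  finally show ?thesis .
qed

lemma varX: assumes "n \<ge> 1"
  shows "measure_pmf.variance (unif_perm n) (\<lambda>p. real (inv_stat n p)) = real n * (real n - 1) * (2 * real n + 5) / 72"
proof -
  have h: "P n" by (rule Pall[OF assms])
  have N: "(fact n :: real) \<noteq> 0" by simp
  have "measure_pmf.variance (unif_perm n) (\<lambda>p. real (inv_stat n p)) = fC (real n) - fA (real n) ^ 2"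
    unfolding var_formula sums_fold using h N unfolding P_def by (simp add: power2_eq_square)
  also have "\<dots> = real n * (real n - 1) * (2 * real n + 5) / 72"
    by (simp add: fA_def fC_def field_simps power2_eq_square power3_eq_cube power4_eq_xxxx; simp add: algebra_simps)
  finally show ?thesis .
qed

lemma varY: assumes "n \<ge> 1"
  shows "measure_pmf.variance (unif_perm n) (\<lambda>p. real (maj_stat n p)) = real n * (real n - 1) * (2 * real n + 5) / 72"
proof -
  have h: "P n" by (rule Pall[OF assms])
  have N: "(fact n :: real) \<noteq> 0" by simp
  have "measure_pmf.variance (unif_perm n) (\<lambda>p. real (maj_stat n p)) = fC (real n) - fA (real n) ^ 2"
    unfolding var_formula sums_fold using h N unfolding P_def by (simp add: power2_eq_square)
  also have "\<dots> = real n * (real n - 1) * (2 * real n + 5) / 72"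
    by (simp add: fA_def fC_def field_simps power2_eq_square power3_eq_cube power4_eq_xxxx; simp add: algebra_simps)
  finally show ?thesis .
qed

lemma corr_val: assumes "n \<ge> 2"
  shows "correlation (unif_perm n) (\<lambda>p. real (inv_stat n p)) (\<lambda>p. real (maj_stat n p)) = 9 / (2 * real n + 5)"
proof -
  have n1: "n \<ge> 1" using assms by simp
  have pos: "real n * (real n - 1) * (2 * real n + 5) / 72 > 0" using assms by simp
  have s0: "\<And>x::real. x > 0 \<Longrightarrow> sqrt (x * x) = x" by simp
  note s = s0[OF pos]
  have a1: "real n - 1 \<noteq> 0" "real n \<noteq> 0" "2 * real n + 5 \<noteq> 0" using assms by auto
  have "(real n * (real n - 1) / 8) / (real n * (real n - 1) * (2 * real n + 5) / 72) = 9 / (2 * real n + 5)"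
  proof -
    have g: "\<And>k c :: real. k \<noteq> 0 \<Longrightarrow> c \<noteq> 0 \<Longrightarrow> (k / 8) / (k * c / 72) = 9 / c" by (simp add: field_simps)
    show ?thesis by (rule g) (use a1 in auto)
  qed
  then show ?thesis unfolding correlation_def cov_val[OF n1] varX[OF n1] varY[OF n1] s .
qed

lemma lim9: "(\<lambda>n. 9 / (2 * real n + 5)) \<longlonglongrightarrow> 0"
proof -
  have m: "filterlim (\<lambda>n. 2 * real n) at_top sequentially"
    by (rule filterlim_tendsto_pos_mult_at_top[OF tendsto_const _ filterlim_real_sequentially]) simp
  have "filterlim (\<lambda>n. 5 + 2 * real n) at_top sequentially"
    by (rule filterlim_tendsto_add_at_top[OF tendsto_const m])
  then have "filterlim (\<lambda>n. 2 * real n + 5) at_infinity sequentially"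
    by (simp add: add.commute filterlim_at_top_imp_at_infinity)
  then show ?thesis by (rule tendsto_divide_0[OF tendsto_const])
qed

theorem mainTheorem4:
  shows "(\<forall>n::nat. n \<ge> 1 \<longrightarrow>
            covariance (unif_perm n) (\<lambda>p. real (inv_stat n p)) (\<lambda>p. real (maj_stat n p))
              = real n * (real n - 1) / 8)
       \<and> (\<forall>n::nat. n \<ge> 2 \<longrightarrow>
            correlation (unif_perm n) (\<lambda>p. real (inv_stat n p)) (\<lambda>p. real (maj_stat n p))
              = 9 * (real n - 1) / (2 * real n ^ 2 + 3 * real n - 5)
          \<and> correlation (unif_perm n) (\<lambda>p. real (inv_stat n p)) (\<lambda>p. real (maj_stat n p))
              = 9 / (2 * real n + 5))
       \<and> (\<lambda>n. correlation (unif_perm n) (\<lambda>p. real (inv_stat n p)) (\<lambda>p. real (maj_stat n p)))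
            \<longlonglongrightarrow> 0"
proof (intro conjI allI impI)
  fix n :: nat assume "n \<ge> 1" then show "covariance (unif_perm n) (\<lambda>p. real (inv_stat n p)) (\<lambda>p. real (maj_stat n p))
              = real n * (real n - 1) / 8" by (rule cov_val)
next
  fix n :: nat assume n: "n \<ge> 2"
  have e: "2 * real n ^ 2 + 3 * real n - 5 = (real n - 1) * (2 * real n + 5)" by (simp add: algebra_simps power2_eq_square)
  have ne: "real n - 1 \<noteq> 0" using n by simp
  have g: "\<And>k c :: real. k \<noteq> 0 \<Longrightarrow> 9 * k / (k * c) = 9 / c" by simp
  have "9 * (real n - 1) / (2 * real n ^ 2 + 3 * real n - 5) = 9 / (2 * real n + 5)"
    unfolding e by (rule g[OF ne])
  then show "correlation (unif_perm n) (\<lambda>p. real (inv_stat n p)) (\<lambda>p. real (maj_stat n p))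
              = 9 * (real n - 1) / (2 * real n ^ 2 + 3 * real n - 5)" using corr_val[OF n] by simp
  show "correlation (unif_perm n) (\<lambda>p. real (inv_stat n p)) (\<lambda>p. real (maj_stat n p)) = 9 / (2 * real n + 5)"
    by (rule corr_val[OF n])
next
  have ev: "eventually (\<lambda>n. 9 / (2 * real n + 5) = correlation (unif_perm n) (\<lambda>p. real (inv_stat n p)) (\<lambda>p. real (maj_stat n p))) sequentially"
    using eventually_ge_at_top[of 2] by eventually_elim (simp add: corr_val)
  show "(\<lambda>n. correlation (unif_perm n) (\<lambda>p. real (inv_stat n p)) (\<lambda>p. real (maj_stat n p))) \<longlonglongrightarrow> 0"
    by (rule Lim_transform_eventually[OF lim9 ev])
qed

end
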